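(* Let $\mathscr C$ be a concept class on a set $\Omega$ and $d\in\mathbb N$. The following are equivalent: (1) $\mathrm{VC}(\mathscr C\,\mathrm{mod}\,\omega_1)\le d$; (2) for every countable subclass $\mathscr C'\subseteq\mathscr C$ there exists a countable set $N\subseteq\Omega$ such that $\mathrm{VC}(\mathscr C'\restriction(\Omega\setminus N))\le d$.
   Context: $\mathrm{VC}(\mathscr C\restriction X)$ is the VC dimension of $\{C\cap X:C\in\mathscr C\}$. $\mathrm{VC}(\mathscr C\,\mathrm{mod}\,\omega_1)$ is the supremum of $n$ for which there exist uncountable sets $A_1,\dots,A_n\subseteq\Omega$ such that for every $J\subseteq\{1,\dots,n\}$ some $C\in\mathscr C$ contains $A_i$ for all $i\in J$ and is disjoint from $A_j$ for all $j\notin J$. *)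

theory Defs
  imports Main "HOL-Library.Countable_Set" "HOL-Library.Extended_Nat"
begin

definition shatters :: "'a set set \<Rightarrow> 'a set \<Rightarrow> bool" where
  "shatters F A \<longleftrightarrow> (\<forall>B\<subseteq>A. \<exists>C\<in>F. C \<inter> A = B)"

definition VC :: "'a set set \<Rightarrow> enat" where
  "VC F = Sup {enat (card A) | A. finite A \<and> shatters F A}"

definition restr :: "'a set set \<Rightarrow> 'a set \<Rightarrow> 'a set set" where
  "restr F X = {C \<inter> X | C. C \<in> F}"

definition VC_mod_omega1 :: "'a set \<Rightarrow> 'a set set \<Rightarrow> enat" where
  "VC_mod_omega1 \<Omega> F = Sup {enat n | n. \<exists>A :: nat \<Rightarrow> 'a set.
      (\<forall>i<n. A i \<subseteq> \<Omega> \<and> uncountable (A i)) \<and>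
      (\<forall>J\<subseteq>{..<n}. \<exists>C\<in>F. (\<forall>i\<in>J. A i \<subseteq> C) \<and> (\<forall>j\<in>{..<n} - J. A j \<inter> C = {}))}"

end

theory Submission
  imports Defs
begin

lemma dir1:
  fixes \<Omega> :: "'a set" and \<C> \<C>' :: "'a set set" and d :: nat
  assumes H: "VC_mod_omega1 \<Omega> \<C> \<le> enat d" and sub: "\<C>' \<subseteq> \<C>" and cC: "countable \<C>'"
  shows "\<exists>N. N \<subseteq> \<Omega> \<and> countable N \<and> VC (restr \<C>' (\<Omega> - N)) \<le> enat d"
proof -
  define cell where "cell = (\<lambda>(F::'a set set, G::'a set set). {y\<in>\<Omega>. \<forall>C\<in>F. y \<in> C \<longleftrightarrow> C \<in> G})"
  define S where "S = {F. finite F \<and> F \<subseteq> \<C>'}"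
  have cS: "countable S" unfolding S_def using countable_Collect_finite_subset[OF cC] by simp
  define K where "K = cell ` (S \<times> UNIV)"
  have "countable (cell ` (S \<times> S))" using cS by blast
  define N where "N = \<Union>{X \<in> cell ` (S \<times> S). countable X}"
  have cN: "countable N" unfolding N_def
  proof -
    have "\<Union>{X \<in> cell ` (S \<times> S). countable X} = (\<Union>X\<in>{X \<in> cell ` (S \<times> S). countable X}. X)" by auto
    moreover have "countable (\<Union>X\<in>{X \<in> cell ` (S \<times> S). countable X}. X)"
      by (rule countable_UN) (use \<open>countable (cell ` (S \<times> S))\<close> in auto)
    ultimately show "countable (\<Union>{X \<in> cell ` (S \<times> S). countable X})" by simp
  qed
  have NO: "N \<subseteq> \<Omega>" unfolding N_def cell_def by auto
  have "VC (restr \<C>' (\<Omega> - N)) \<le> enat d"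
    unfolding VC_def
  proof (rule Sup_least, clarify)
    fix A assume fA: "finite A" and sh: "shatters (restr \<C>' (\<Omega> - N)) A"
    obtain x where bx: "bij_betw x {0..<card A} A" using ex_bij_betw_nat_finite[OF fA] by blast
    define n where "n = card A"
    have AO: "A \<subseteq> \<Omega> - N"
    proof -
      obtain D where "D \<in> restr \<C>' (\<Omega> - N)" "D \<inter> A = A" using sh unfolding shatters_def by blast
      then show ?thesis unfolding restr_def by auto
    qed
    have "\<forall>J. \<exists>C. J \<subseteq> {..<n} \<longrightarrow> C \<in> \<C>' \<and> C \<inter> (\<Omega> - N) \<inter> A = x ` J"
    proof (intro allI)
      fix J
      show "\<exists>C. J \<subseteq> {..<n} \<longrightarrow> C \<in> \<C>' \<and> C \<inter> (\<Omega> - N) \<inter> A = x ` J"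
      proof (cases "J \<subseteq> {..<n}")
        case True
        then have "x ` J \<subseteq> A" using bx unfolding n_def bij_betw_def by (auto simp: atLeast0LessThan)
        then obtain D where "D \<in> restr \<C>' (\<Omega> - N)" "D \<inter> A = x ` J" using sh unfolding shatters_def by blast
        then show ?thesis unfolding restr_def by auto
      qed auto
    qed
    then obtain CJ where CJ: "\<And>J. J \<subseteq> {..<n} \<Longrightarrow> CJ J \<in> \<C>' \<and> CJ J \<inter> (\<Omega> - N) \<inter> A = x ` J"
      by metis
    define F where "F = CJ ` Pow {..<n}"
    have FS: "F \<in> S" unfolding S_def F_def using CJ by auto
    define Ai where "Ai = (\<lambda>i. cell (F, {C\<in>F. x i \<in> C}))"
    have xA: "\<And>i. i < n \<Longrightarrow> x i \<in> A" using bx unfolding n_def bij_betw_def by auto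
    have inj: "inj_on x {..<n}" using bx unfolding n_def bij_betw_def by (auto simp: atLeast0LessThan)
    have "enat n \<le> VC_mod_omega1 \<Omega> \<C>"
      unfolding VC_mod_omega1_def
    proof (rule Sup_upper, simp, rule exI[of _ Ai], intro conjI allI impI ballI)
      fix i assume i: "i < n"
      show "Ai i \<subseteq> \<Omega>" unfolding Ai_def cell_def by auto
      have xi: "x i \<in> Ai i" using xA[OF i] AO unfolding Ai_def cell_def by auto
      show "uncountable (Ai i)"
      proof
        assume "countable (Ai i)"
        moreover have "Ai i \<in> cell ` (S \<times> S)" unfolding Ai_def using FS unfolding S_def by auto
        ultimately have "Ai i \<subseteq> N" unfolding N_def by auto
        then show False using xi xA[OF i] AO by auto
      qed
    next
      fix J assume J: "J \<subseteq> {..<n}"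
      have CJF: "CJ J \<in> F" unfolding F_def using J by auto
      show "\<exists>C\<in>\<C>. (\<forall>i\<in>J. Ai i \<subseteq> C) \<and> (\<forall>j\<in>{..<n} - J. Ai j \<inter> C = {})"
      proof (rule bexI[of _ "CJ J"], intro conjI ballI)
        show "CJ J \<in> \<C>" using CJ[OF J] sub by auto
      next
        fix i assume "i \<in> J"
        then have "x i \<in> CJ J" using CJ[OF J] by auto
        then show "Ai i \<subseteq> CJ J" using CJF unfolding Ai_def cell_def by auto
      next
        fix j assume j: "j \<in> {..<n} - J"
        have "x j \<notin> x ` J" using inj J j by (auto simp: inj_on_def) 
        then have "x j \<notin> CJ J" using CJ[OF J] xA[of j] j AO by auto
        then show "Ai j \<inter> CJ J = {}" using CJF unfolding Ai_def cell_def by auto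
      qed
    qed
    then show "enat (card A) \<le> enat d" using H unfolding n_def by (meson order_trans)
  qed
  then show ?thesis using NO cN by blast
qed

lemma dir2:
  fixes \<Omega> :: "'a set" and \<C> :: "'a set set" and d :: nat
  assumes H: "\<forall>\<C>'. \<C>' \<subseteq> \<C> \<and> countable \<C>' \<longrightarrow>
       (\<exists>N. N \<subseteq> \<Omega> \<and> countable N \<and> VC (restr \<C>' (\<Omega> - N)) \<le> enat d)"
  shows "VC_mod_omega1 \<Omega> \<C> \<le> enat d"
  unfolding VC_mod_omega1_def
proof (rule Sup_least, clarify)
  fix n and A :: "nat \<Rightarrow> 'a set"
  assume U: "\<forall>i<n. A i \<subseteq> \<Omega> \<and> uncountable (A i)"
    and Sh: "\<forall>J\<subseteq>{..<n}. \<exists>C\<in>\<C>. (\<forall>i\<in>J. A i \<subseteq> C) \<and> (\<forall>j\<in>{..<n} - J. A j \<inter> C = {})"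
  have "\<forall>J. \<exists>C. J \<subseteq> {..<n} \<longrightarrow> C\<in>\<C> \<and> (\<forall>i\<in>J. A i \<subseteq> C) \<and> (\<forall>j\<in>{..<n} - J. A j \<inter> C = {})"
    using Sh by metis
  then obtain CJ where CJ: "\<And>J. J \<subseteq> {..<n} \<Longrightarrow> CJ J\<in>\<C> \<and> (\<forall>i\<in>J. A i \<subseteq> CJ J) \<and> (\<forall>j\<in>{..<n} - J. A j \<inter> CJ J = {})"
    by metis
  define C' where "C' = CJ ` Pow {..<n}"
  have "C' \<subseteq> \<C>" unfolding C'_def using CJ by auto
  moreover have "countable C'" unfolding C'_def by (simp add: countable_finite)
  ultimately obtain N where N: "N \<subseteq> \<Omega>" "countable N" "VC (restr C' (\<Omega> - N)) \<le> enat d"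
    using H by blast
  have ne: "\<And>i. i < n \<Longrightarrow> A i - N \<noteq> {}"
  proof
    fix i assume i: "i < n" "A i - N = {}"
    then have "A i \<subseteq> N" by auto
    then have "countable (A i)" using N(2) countable_subset by blast
    then show False using U i by auto
  qed
  define a where "a = (\<lambda>i. SOME y. y \<in> A i - N)"
  have aA: "\<And>i. i < n \<Longrightarrow> a i \<in> A i - N" unfolding a_def using ne by (meson ex_in_conv someI_ex)
  have disj: "\<And>i j. i < n \<Longrightarrow> j < n \<Longrightarrow> i \<noteq> j \<Longrightarrow> A i \<inter> A j = {}"
  proof -
    fix i j assume ij: "i < n" "j < n" "i \<noteq> j"
    have "{i} \<subseteq> {..<n}" using ij by auto
    from CJ[OF this] ij show "A i \<inter> A j = {}" by auto
  qed
  have inj: "inj_on a {..<n}"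
  proof (rule inj_onI)
    fix i j assume "i \<in> {..<n}" "j \<in> {..<n}" "a i = a j"
    then show "i = j" using aA[of i] aA[of j] disj[of i j] by auto
  qed
  define P where "P = a ` {..<n}"
  have cP: "card P = n" unfolding P_def using inj by (simp add: card_image)
  have "shatters (restr C' (\<Omega> - N)) P"
    unfolding shatters_def
  proof (intro allI impI)
    fix B assume B: "B \<subseteq> P"
    define J where "J = {i\<in>{..<n}. a i \<in> B}"
    have J: "J \<subseteq> {..<n}" unfolding J_def by auto
    have "CJ J \<inter> (\<Omega> - N) \<in> restr C' (\<Omega> - N)" unfolding restr_def C'_def using J by auto
    moreover have "CJ J \<inter> (\<Omega> - N) \<inter> P = B"
    proof
      show "CJ J \<inter> (\<Omega> - N) \<inter> P \<subseteq> B"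
      proof
        fix y assume y: "y \<in> CJ J \<inter> (\<Omega> - N) \<inter> P"
        then obtain i where i: "i < n" "y = a i" unfolding P_def by auto
        show "y \<in> B"
        proof (rule ccontr)
          assume "y \<notin> B"
          then have "i \<in> {..<n} - J" unfolding J_def using i by auto
          then have "A i \<inter> CJ J = {}" using CJ[OF J] by auto
          then show False using aA[OF i(1)] y i by auto
        qed
      qed
    next
      show "B \<subseteq> CJ J \<inter> (\<Omega> - N) \<inter> P"
      proof
        fix y assume y: "y \<in> B"
        then obtain i where i: "i < n" "y = a i" using B unfolding P_def by auto
        then have "i \<in> J" unfolding J_def using y by auto
        then have "A i \<subseteq> CJ J" using CJ[OF J] by auto
        then show "y \<in> CJ J \<inter> (\<Omega> - N) \<inter> P"
          using aA[OF i(1)] i U y B unfolding P_def by auto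
      qed
    qed
    ultimately show "\<exists>C\<in>restr C' (\<Omega> - N). C \<inter> P = B" by blast
  qed
  moreover have "finite P" unfolding P_def by simp
  ultimately have "enat n \<le> VC (restr C' (\<Omega> - N))"
    unfolding VC_def using cP by (intro Sup_upper) auto
  then show "enat n \<le> enat d" using N(3) by (meson order_trans)
qed

theorem mainTheorem17:
  fixes \<Omega> :: "'a set" and \<C> :: "'a set set" and d :: nat
  assumes "\<forall>C\<in>\<C>. C \<subseteq> \<Omega>"
  shows "VC_mod_omega1 \<Omega> \<C> \<le> enat d \<longleftrightarrow>
    (\<forall>\<C>'. \<C>' \<subseteq> \<C> \<and> countable \<C>' \<longrightarrow>
       (\<exists>N. N \<subseteq> \<Omega> \<and> countable N \<and> VC (restr \<C>' (\<Omega> - N)) \<le> enat d))"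
  using dir1[of \<Omega> \<C> d] dir2[of \<C> \<Omega> d] by blast

end
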